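(* Let $(X,\leq,\cdot)$ be a Jacobi commutator semi-lattice, let $x\in X$, and let $g:X\to X$ be the inner derivation defined by $g(s)=x\cdot s$ for each $s\in X$. Then for all non-negative integers $i$ and $j$, $$g^i(x)\cdot g^j(x)\leq g^{i+j+1}(x),$$ where $g^0$ denotes the identity map.
   Context: A join semi-lattice is a poset $(X,\leq)$ with a binary operation $\vee$ that is idempotent, commutative and associative, such that $a\leq b \iff a\vee b=b$ for all $a,b\in X$. A commutator semi-lattice is a triple $(X,\leq,\cdot)$ where $(X,\leq,\vee)$ is a join semi-lattice and $\cdot$ is a binary operation on $X$ such that: $\cdot$ is commutative; $a\cdot b\leq b$ for all $a,b$; and $a\cdot(b\vee c)=(a\cdot b)\vee(a\cdot c)$ for all $a,b,c$. It is a Jacobi commutator semi-lattice if moreover $a\cdot(b\cdot c)\leq ((a\cdot b)\cdot c)\vee(b\cdot(a\cdot c))$ for all $a,b,c\in X$. A derivation of a commutator semi-lattice is a map $f:X\to X$ preserving joins ($f(a\vee b)=f(a)\vee f(b)$) and satisfying $f(a\cdot b)\leq (f(a)\cdot b)\vee(a\cdot f(b))$ for all $a,b$; it is inner if $f=x\cdot-$ for some $x\in X$. *)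

theory Defs
  imports Main
begin

definition commutator_semilattice :: "('a::semilattice_sup \<Rightarrow> 'a \<Rightarrow> 'a) \<Rightarrow> bool" where
  "commutator_semilattice m \<longleftrightarrow>
     (\<forall>a b. m a b = m b a) \<and>
     (\<forall>a b. m a b \<le> b) \<and>
     (\<forall>a b c. m a (sup b c) = sup (m a b) (m a c))"

definition jacobi_commutator_semilattice :: "('a::semilattice_sup \<Rightarrow> 'a \<Rightarrow> 'a) \<Rightarrow> bool" where
  "jacobi_commutator_semilattice m \<longleftrightarrow>
     commutator_semilattice m \<and>
     (\<forall>a b c. m a (m b c) \<le> sup (m (m a b) c) (m b (m a c)))"

end

theory Submission
  imports Defs
begin

theorem proposition2p8:
  fixes m :: "'a::semilattice_sup \<Rightarrow> 'a \<Rightarrow> 'a" and x :: 'a and g :: "'a \<Rightarrow> 'a"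
  assumes "jacobi_commutator_semilattice m"
    and "\<And>s. g s = m x s"
  shows "\<forall>i j :: nat. m ((g ^^ i) x) ((g ^^ j) x) \<le> (g ^^ (i + j + 1)) x"
proof -
  have comm: "\<And>a b. m a b = m b a" and dist: "\<And>a b c. m a (sup b c) = sup (m a b) (m a c)"
    and jac: "\<And>a b c. m a (m b c) \<le> sup (m (m a b) c) (m b (m a c))"
    using assms(1) unfolding jacobi_commutator_semilattice_def commutator_semilattice_def by auto
  have mono: "m a b \<le> m a c" if "b \<le> c" for a b c
  proof -
    have "m a c = sup (m a b) (m a c)" using dist[of a b c] that by (simp add: sup_absorb2)
    then show ?thesis by (metis sup_ge1)
  qed
  have main: "\<And>j. m ((g ^^ i) x) ((g ^^ j) x) \<le> (g ^^ (i + j + 1)) x" for i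
  proof (induction i)
    case 0
    then show ?case using assms(2) by simp
  next
    case (Suc i)
    fix j
    let ?xi = "(g ^^ i) x" and ?xj = "(g ^^ j) x"
    have e: "m ((g ^^ Suc i) x) ?xj = m ?xj (m x ?xi)" using assms(2) comm[of "m x ?xi" ?xj] by simp
    have j1: "m ?xj (m x ?xi) \<le> sup (m (m ?xj x) ?xi) (m x (m ?xj ?xi))" by (rule jac)
    have a1: "m (m ?xj x) ?xi \<le> (g ^^ (Suc i + j + 1)) x"
    proof -
      have "m (m ?xj x) ?xi = m ?xi ((g ^^ Suc j) x)" using assms(2) comm[of ?xj x] comm[of "m x ?xj" ?xi] by simp
      also have "\<dots> \<le> (g ^^ (i + Suc j + 1)) x" by (rule Suc.IH)
      finally show ?thesis by simp
    qed
    have a2: "m x (m ?xj ?xi) \<le> (g ^^ (Suc i + j + 1)) x"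
    proof -
      have "m ?xj ?xi \<le> (g ^^ (i + j + 1)) x" using Suc.IH[of j] comm[of ?xj ?xi] by simp
      then have "m x (m ?xj ?xi) \<le> m x ((g ^^ (i + j + 1)) x)" by (rule mono)
      also have "\<dots> = (g ^^ (Suc i + j + 1)) x" using assms(2) by simp
      finally show ?thesis .
    qed
    show "m ((g ^^ Suc i) x) ?xj \<le> (g ^^ (Suc i + j + 1)) x"
      proof -
      have "sup (m (m ?xj x) ?xi) (m x (m ?xj ?xi)) \<le> (g ^^ (Suc i + j + 1)) x"
        using a1 a2 by (rule sup_least)
      with j1 e show ?thesis by (metis order_trans)
    qed
  qed
  then show ?thesis by blast
qed

end
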